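(* Let $\mathcal T$ be a triangulated category, linear over some field, with well-defined numerical Grothendieck group $\mathcal N(\mathcal T)$ of finite rank, and let $\sigma=(Z,\mathcal A)$ be a numerical stability condition on $\mathcal T$. Assume that $Z$ admits factorizations $Z=g_i\circ v_i$, $i=1,\dots,n$, through quotient lattices $v_i\colon\mathcal N(\mathcal T)\twoheadrightarrow\Lambda_i$, $g_i\colon\Lambda_i\to\mathbb C$, such that $\bigcap_i\ker(v_i)=\{0\}$, and that there are quadratic forms $Q_i$ on $\Lambda_i\otimes\mathbb R$ satisfying the support property (i.e. $Q_i(v_i(\mathcal E))\ge0$ for every $\sigma$-semistable $\mathcal E$ and $Q_i$ is negative definite on $\ker(g_i)$). Then for any $\lambda_1,\dots,\lambda_n>0$, $Z$ satisfies the support property on $\mathcal N(\mathcal T)$ with respect to $Q\coloneqq\lambda_1Q_1(v_1)+\dots+\lambda_nQ_n(v_n)$.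
   Context: The support property for $Z$ on $\mathcal N(\mathcal T)$ with respect to a quadratic form $Q$ on $\mathcal N(\mathcal T)\otimes\mathbb R$ means: $Q([\mathcal E])\ge0$ for every $\sigma$-semistable object $\mathcal E$, and $Q$ is negative definite on $\ker(Z)\subset\mathcal N(\mathcal T)\otimes\mathbb R$. *)

theory Defs
  imports "HOL-Analysis.Analysis"
begin

text \<open>N(T) is modelled as the lattice int^'r (finite rank), N(T) (x) R as real^'r.
  Each quotient lattice Lambda_i has rank d i and is identified with Z^(d i);
  vectors of Lambda_i (x) R are functions nat => real vanishing from index d i on.\<close>

definition to_real :: "int ^ 'r \<Rightarrow> real ^ 'r" where
  "to_real e = (\<chi> k. of_int (e $ k))"

definition lat_map :: "nat \<Rightarrow> (nat \<Rightarrow> 'r::finite \<Rightarrow> int) \<Rightarrow> int ^ 'r \<Rightarrow> nat \<Rightarrow> int" where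
  "lat_map d M e = (\<lambda>j. if j < d then (\<Sum>k\<in>UNIV. M j k * e $ k) else 0)"

definition real_map :: "nat \<Rightarrow> (nat \<Rightarrow> 'r::finite \<Rightarrow> int) \<Rightarrow> real ^ 'r \<Rightarrow> nat \<Rightarrow> real" where
  "real_map d M x = (\<lambda>j. if j < d then (\<Sum>k\<in>UNIV. of_int (M j k) * x $ k) else 0)"

definition surj_lat_map :: "nat \<Rightarrow> (nat \<Rightarrow> 'r::finite \<Rightarrow> int) \<Rightarrow> bool" where
  "surj_lat_map d M \<longleftrightarrow> (\<forall>y::nat \<Rightarrow> int. (\<forall>j\<ge>d. y j = 0) \<longrightarrow> (\<exists>e. lat_map d M e = y))"

definition lin_C :: "nat \<Rightarrow> (nat \<Rightarrow> complex) \<Rightarrow> (nat \<Rightarrow> real) \<Rightarrow> complex" where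
  "lin_C d c y = (\<Sum>j<d. c j * of_real (y j))"

definition central_charge :: "('r::finite \<Rightarrow> complex) \<Rightarrow> real ^ 'r \<Rightarrow> complex" where
  "central_charge z x = (\<Sum>k\<in>UNIV. z k * of_real (x $ k))"

definition quad_form :: "nat \<Rightarrow> (nat \<Rightarrow> nat \<Rightarrow> real) \<Rightarrow> (nat \<Rightarrow> real) \<Rightarrow> real" where
  "quad_form d A y = (\<Sum>j<d. \<Sum>l<d. A j l * y j * y l)"

text \<open>Support property for Z on N(T) with respect to Q on N(T) (x) R, where S is the set
  of classes [E] of sigma-semistable objects E.\<close>
definition support_property ::
  "(int ^ 'r) set \<Rightarrow> (real ^ 'r \<Rightarrow> complex) \<Rightarrow> (real ^ 'r \<Rightarrow> real) \<Rightarrow> bool" where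
  "support_property S Z Q \<longleftrightarrow>
     (\<forall>e\<in>S. Q (to_real e) \<ge> 0) \<and> (\<forall>x. Z x = 0 \<longrightarrow> x \<noteq> 0 \<longrightarrow> Q x < 0)"

end

theory Submission
  imports Defs
begin

definition gram :: "nat \<Rightarrow> (nat \<Rightarrow> nat) \<Rightarrow> (nat \<Rightarrow> nat \<Rightarrow> 'r \<Rightarrow> int) \<Rightarrow> 'a::comm_ring_1 ^'r^'r" where
  "gram n d M = (\<chi> k l. of_int (\<Sum>i<n. \<Sum>j<d i. M i j k * M i j l))"

definition rowf :: "(nat \<Rightarrow> nat \<Rightarrow> 'r::finite \<Rightarrow> int) \<Rightarrow> nat \<Rightarrow> nat \<Rightarrow> 'a::comm_ring_1^'r \<Rightarrow> 'a" where
  "rowf M i j x = (\<Sum>k\<in>UNIV. of_int (M i j k) * x $ k)"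

lemma det_of_int_mat:
  fixes A :: "int^'n^'n"
  shows "det ((\<chi> k l. of_int (A$k$l)) :: 'a::comm_ring_1^'n^'n) = of_int (det A)"
  unfolding det_def by (simp add: of_int_sum of_int_mult of_int_prod)

lemma gram_det: "det (gram n d M :: 'a::comm_ring_1^'r^'r) = of_int (det (gram n d M :: int^'r^'r))"
proof -
  have "(gram n d M :: 'a^'r^'r) = (\<chi> k l. of_int ((gram n d M :: int^'r^'r)$k$l))"
    by (simp add: gram_def)
  then show ?thesis using det_of_int_mat by metis
qed

lemma gram_mult: "(gram n d M *v x) $ k = (\<Sum>i<n. \<Sum>j<d i. of_int (M i j k) * rowf M i j x)"
proof -
  have "(gram n d M *v x) $ k = (\<Sum>l\<in>UNIV. (\<Sum>i<n. \<Sum>j<d i. of_int (M i j k) * (of_int (M i j l) * x $ l)))"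
    by (simp add: gram_def matrix_vector_mult_def of_int_sum sum_distrib_right mult.assoc)
  also have "\<dots> = (\<Sum>i<n. \<Sum>j<d i. \<Sum>l\<in>UNIV. of_int (M i j k) * (of_int (M i j l) * x $ l))"
    by (subst sum.swap, rule sum.cong, simp, subst sum.swap, simp)
  also have "\<dots> = (\<Sum>i<n. \<Sum>j<d i. of_int (M i j k) * rowf M i j x)"
    by (simp add: rowf_def sum_distrib_left)
  finally show ?thesis .
qed

lemma gram_quad: "(\<Sum>k\<in>UNIV. x $ k * (gram n d M *v x) $ k) = (\<Sum>i<n. \<Sum>j<d i. (rowf M i j x)^2)"
proof -
  have "(\<Sum>k\<in>UNIV. x $ k * (gram n d M *v x) $ k) = (\<Sum>k\<in>UNIV. \<Sum>i<n. \<Sum>j<d i. (of_int (M i j k) * x $ k) * rowf M i j x)"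
    by (simp add: gram_mult sum_distrib_left mult_ac)
  also have "\<dots> = (\<Sum>i<n. \<Sum>j<d i. \<Sum>k\<in>UNIV. (of_int (M i j k) * x $ k) * rowf M i j x)"
    by (subst sum.swap, rule sum.cong, simp, subst sum.swap, simp)
  also have "\<dots> = (\<Sum>i<n. \<Sum>j<d i. (rowf M i j x)^2)"
    by (simp add: rowf_def sum_distrib_right power2_eq_square)
  finally show ?thesis .
qed

lemma scale_rat: fixes v :: "rat^'r" shows "\<exists>D::int. D > 0 \<and> (\<forall>k. \<exists>m::int. of_int D * v$k = of_int m)"
proof -
  define den where "den k = snd (quotient_of (v$k))" for k
  define D where "D = (\<Prod>k\<in>UNIV. den k)"
  have dp: "den k > 0" for k unfolding den_def by (metis quotient_of_denom_pos prod.collapse)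
  have "D > 0" unfolding D_def using dp by (simp add: prod_pos)
  moreover have "\<exists>m::int. of_int D * v$k = of_int m" for k
  proof -
    obtain a b where ab: "quotient_of (v$k) = (a,b)" by (metis surj_pair)
    have vk: "v$k = of_int a / of_int b" using ab quotient_of_div by blast
    have bk: "den k = b" using ab den_def by simp
    have "D = b * (\<Prod>k'\<in>UNIV - {k}. den k')" unfolding D_def
      using prod.remove[of UNIV k den] bk by simp
    then have "of_int D * v$k = of_int ((\<Prod>k'\<in>UNIV - {k}. den k') * a)"
      using vk dp[of k] bk by simp
    then show ?thesis by blast
  qed
  ultimately show ?thesis by blast
qed


lemma det_nz_ker: fixes A :: "'a::field^'n^'n" shows "det A \<noteq> 0 \<longleftrightarrow> (\<forall>x. A *v x = 0 \<longrightarrow> x = 0)"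
  by (metis invertible_det_nz invertible_left_inverse matrix_left_invertible_ker)

lemma real_ker:
  fixes M :: "nat \<Rightarrow> nat \<Rightarrow> 'r::finite \<Rightarrow> int"
  assumes ker_inter: "\<forall>e. (\<forall>i<n. lat_map (d i) (M i) e = (\<lambda>_. 0)) \<longrightarrow> e = 0"
    and x: "\<forall>i<n. \<forall>j<d i. rowf M i j x = (0::real)"
  shows "x = 0"
proof -
  have "det (gram n d M :: rat^'r^'r) \<noteq> 0"
  proof
    assume "det (gram n d M :: rat^'r^'r) = 0"
    then obtain v :: "rat^'r" where v0: "v \<noteq> 0" and gv: "gram n d M *v v = 0"
      using det_nz_ker by blast
    have "(\<Sum>i<n. \<Sum>j<d i. (rowf M i j v)^2) = 0"
      using gram_quad[of v n d M] gv by simp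
    then have rv: "rowf M i j v = 0" if "i < n" "j < d i" for i j
    proof -
      have "\<forall>i\<in>{..<n}. (\<Sum>j<d i. (rowf M i j v)^2) = 0"
        using \<open>(\<Sum>i<n. \<Sum>j<d i. (rowf M i j v)^2) = 0\<close>
        by (subst (asm) sum_nonneg_eq_0_iff) (auto intro: sum_nonneg)
      then have "(\<Sum>j<d i. (rowf M i j v)^2) = 0" using that by simp
      then have "\<forall>j\<in>{..<d i}. (rowf M i j v)^2 = 0"
        by (subst (asm) sum_nonneg_eq_0_iff) auto
      then show ?thesis using that by simp
    qed
    obtain D :: int where Dp: "D > 0" and Dm: "\<forall>k. \<exists>m::int. of_int D * v$k = of_int m"
      using scale_rat by blast
    define w :: "int^'r" where "w = (\<chi> k. SOME m. of_int D * v$k = of_int m)"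
    have wk: "of_int (w$k) = of_int D * v$k" for k
      unfolding w_def using someI_ex[OF Dm[rule_format, of k]] by simp
    have "lat_map (d i) (M i) w = (\<lambda>_. 0)" if "i < n" for i
    proof
      fix j
      show "lat_map (d i) (M i) w j = 0"
      proof (cases "j < d i")
        case True
        have "(of_int (\<Sum>k\<in>UNIV. M i j k * w $ k) :: rat) = of_int D * rowf M i j v"
          by (simp add: of_int_sum wk rowf_def sum_distrib_left mult_ac)
        also have "\<dots> = 0" using rv[OF that True] by simp
        finally have "(\<Sum>k\<in>UNIV. M i j k * w $ k) = 0" by (metis of_int_eq_0_iff)
        then show ?thesis using True by (simp add: lat_map_def)
      qed (simp add: lat_map_def)
    qed
    then have "w = 0" using ker_inter by blast
    then have "v$k = 0" for k using wk[of k] Dp by simp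
    then have "v = 0" by (simp add: vec_eq_iff)
    then show False using v0 by simp
  qed
  then have "det (gram n d M :: int^'r^'r) \<noteq> 0" using gram_det[where 'a=rat and n=n and d=d and M=M] by (metis of_int_0)
  then have "det (gram n d M :: real^'r^'r) \<noteq> 0" using gram_det[where 'a=real and n=n and d=d and M=M] by simp
  moreover have "gram n d M *v x = 0"
    using x by (simp add: vec_eq_iff gram_mult)
  ultimately show ?thesis using det_nz_ker by blast
qed

lemma lin_ext:
  fixes M :: "nat \<Rightarrow> 'r::finite \<Rightarrow> int"
  shows "lin_C d g (real_map d M x) = (\<Sum>k\<in>UNIV. (\<Sum>j<d. g j * of_int (M j k)) * of_real (x$k))"
  unfolding lin_C_def real_map_def
  by (simp add: sum_distrib_left sum_distrib_right mult_ac sum.swap[of _ "{..<d}"])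


theorem lemma7p5:
  fixes S :: "(int ^ 'r) set"
    and z :: "'r \<Rightarrow> complex"
    and n :: nat
    and d :: "nat \<Rightarrow> nat"
    and M :: "nat \<Rightarrow> nat \<Rightarrow> 'r \<Rightarrow> int"
    and g :: "nat \<Rightarrow> nat \<Rightarrow> complex"
    and A :: "nat \<Rightarrow> nat \<Rightarrow> nat \<Rightarrow> real"
    and lam :: "nat \<Rightarrow> real"
  assumes surj: "\<forall>i<n. surj_lat_map (d i) (M i)"
    and factor: "\<forall>i<n. \<forall>e. central_charge z (to_real e)
                        = lin_C (d i) (g i) (real_map (d i) (M i) (to_real e))"
    and ker_inter: "\<forall>e. (\<forall>i<n. lat_map (d i) (M i) e = (\<lambda>_. 0)) \<longrightarrow> e = 0"
    and Q_nonneg: "\<forall>i<n. \<forall>e\<in>S. quad_form (d i) (A i) (real_map (d i) (M i) (to_real e)) \<ge> 0"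
    and Q_negdef: "\<forall>i<n. \<forall>y. (\<forall>j\<ge>d i. y j = 0) \<longrightarrow> lin_C (d i) (g i) y = 0 \<longrightarrow> y \<noteq> (\<lambda>_. 0)
                        \<longrightarrow> quad_form (d i) (A i) y < 0"
    and lam_pos: "\<forall>i<n. lam i > 0"
  shows "support_property S (central_charge z)
           (\<lambda>x. \<Sum>i<n. lam i * quad_form (d i) (A i) (real_map (d i) (M i) x))"
proof -
  have zk: "z k = (\<Sum>j<d i. g i j * of_int (M i j k))" if "i < n" for i k
  proof -
    define e :: "int^'r" where "e = (\<chi> k'. if k' = k then 1 else 0)"
    have "central_charge z (to_real e) = z k"
      by (simp add: central_charge_def to_real_def e_def if_distrib cong: if_cong)
    moreover have "lin_C (d i) (g i) (real_map (d i) (M i) (to_real e)) = (\<Sum>j<d i. g i j * of_int (M i j k))"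
      by (simp add: lin_ext to_real_def e_def if_distrib cong: if_cong)
    ultimately show ?thesis using factor that by metis
  qed
  have fac: "central_charge z x = lin_C (d i) (g i) (real_map (d i) (M i) x)" if "i < n" for i x
    by (simp add: lin_ext central_charge_def zk[OF that])
  have qz: "quad_form d' A' (\<lambda>_. 0) = 0" for d' A' by (simp add: quad_form_def)
  show ?thesis unfolding support_property_def
  proof (intro conjI ballI allI impI)
    fix e assume "e \<in> S"
    then show "0 \<le> (\<Sum>i<n. lam i * quad_form (d i) (A i) (real_map (d i) (M i) (to_real e)))"
      using Q_nonneg lam_pos by (intro sum_nonneg) (simp add: less_imp_le)
  next
    fix x :: "real^'r" assume Zx: "central_charge z x = 0" and x0: "x \<noteq> 0"
    have le: "lam i * quad_form (d i) (A i) (real_map (d i) (M i) x) \<le> 0" if "i < n" for i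
    proof (cases "real_map (d i) (M i) x = (\<lambda>_. 0)")
      case True then show ?thesis by (simp add: qz)
    next
      case False
      have "quad_form (d i) (A i) (real_map (d i) (M i) x) < 0"
        using Q_negdef that False fac[OF that, of x] Zx by (simp add: real_map_def)
      then show ?thesis using lam_pos that by (simp add: mult_pos_neg less_imp_le)
    qed
    obtain i0 where i0: "i0 < n" "real_map (d i0) (M i0) x \<noteq> (\<lambda>_. 0)"
    proof -
      have "\<exists>i<n. real_map (d i) (M i) x \<noteq> (\<lambda>_. 0)"
      proof (rule ccontr)
        assume "\<not> ?thesis"
        then have "\<forall>i<n. \<forall>j<d i. rowf M i j x = 0"
          by (auto simp: rowf_def real_map_def fun_eq_iff) (metis)
        then have "x = 0" using real_ker[OF ker_inter] by blast
        then show False using x0 by simp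
      qed
      then show ?thesis using that by blast
    qed
    have lt: "lam i0 * quad_form (d i0) (A i0) (real_map (d i0) (M i0) x) < 0"
      using Q_negdef i0 fac[OF i0(1), of x] Zx lam_pos
      by (simp add: real_map_def mult_pos_neg)
    have "(\<Sum>i<n. lam i * quad_form (d i) (A i) (real_map (d i) (M i) x))
       = lam i0 * quad_form (d i0) (A i0) (real_map (d i0) (M i0) x)
         + (\<Sum>i\<in>{..<n} - {i0}. lam i * quad_form (d i) (A i) (real_map (d i) (M i) x))"
      using i0(1) by (simp add: sum.remove)
    also have "\<dots> < 0"
      using lt le by (intro add_neg_nonpos sum_nonpos) auto
    finally show "(\<Sum>i<n. lam i * quad_form (d i) (A i) (real_map (d i) (M i) x)) < 0" .
  qed
qed

end
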